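(* Let $\mathcal{X}$ be a finite set of $n$ items and let $\mathcal{D}=\{(x_j,C_j)\}_{j=1}^m$ be a dataset of choices, $x_j\in C_j\subseteq\mathcal{X}$, $|C_j|\ge 2$. The full-rank CDM on $\mathcal{X}$ is identifiable from $\mathcal{D}$ if and only if $\mathrm{rank}(G(\mathcal{D}))=n(n-1)-1$.
   Context: A (full-rank) CDM on $\mathcal{X}$ has parameter vector $u=(u_{xz})_{x\neq z}\in\mathbb{R}^{n(n-1)}$ and choice probabilities, for $C\subseteq\mathcal{X}$, $|C|\ge2$, $x\in C$, $P_u(x\mid C)=\dfrac{\exp\big(\sum_{z\in C\setminus\{x\}}u_{xz}\big)}{\sum_{y\in C}\exp\big(\sum_{z\in C\setminus\{y\}}u_{yz}\big)}$; these are invariant under adding a common constant to all entries of $u$. The CDM is identifiable from $\mathcal{D}$ if whenever $u,u'$ satisfy $P_u(x\mid C)=P_{u'}(x\mid C)$ for every distinct set $C$ among $C_1,\dots,C_m$ and every $x\in C$, then $u'-u=\alpha\mathbf{1}$ for some $\alpha\in\mathbb{R}$. For a set $C$ and $x\in C$, let $g_{x,C}\in\mathbb{Z}^{n(n-1)}$ be the integer vector with $g_{x,C}^{T}u=\sum_{y\in C\setminus\{x\}}\Big([u_{xy}-u_{yx}]+\sum_{z\in C\setminus\{x,y\}}[u_{xz}-u_{yz}]\Big)$ for all $u$. $G(\mathcal{D})$ is the integer matrix with one row $g_{x,C_j}^{T}$ for every datapoint $j$ and every item $x\in C_j$. *)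

theory Defs
  imports "HOL-Analysis.Analysis"
begin

text \<open>Items form a finite type 'a (the item set X is UNIV, n = CARD('a)).
  Parameter vectors u live in real^('a \<times> 'a); only off-diagonal entries u $ (x,z), x \<noteq> z,
  are meaningful (diagonal entries never enter the model).\<close>

definition cdm_prob :: "real^('a::finite \<times> 'a) \<Rightarrow> 'a \<Rightarrow> 'a set \<Rightarrow> real" where
  "cdm_prob u x C =
     exp (\<Sum>z\<in>C - {x}. u $ (x, z)) / (\<Sum>y\<in>C. exp (\<Sum>z\<in>C - {y}. u $ (y, z)))"

definition cdm_identifiable :: "('a::finite \<times> 'a set) list \<Rightarrow> bool" where
  "cdm_identifiable D \<longleftrightarrow>
     (\<forall>u u'. (\<forall>C\<in>snd ` set D. \<forall>x\<in>C. cdm_prob u x C = cdm_prob u' x C) \<longrightarrow>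
        (\<exists>\<alpha>::real. \<forall>x z. x \<noteq> z \<longrightarrow> u' $ (x, z) - u $ (x, z) = \<alpha>))"

definition g_vec :: "'a::finite \<Rightarrow> 'a set \<Rightarrow> real^('a \<times> 'a)" where
  "g_vec x C = (THE g. (\<forall>a. g $ (a, a) = 0) \<and>
     (\<forall>u. g \<bullet> u = (\<Sum>y\<in>C - {x}. (u $ (x, y) - u $ (y, x))
                     + (\<Sum>z\<in>C - {x, y}. u $ (x, z) - u $ (y, z)))))"

definition G_rows :: "('a::finite \<times> 'a set) list \<Rightarrow> (real^('a \<times> 'a)) set" where
  "G_rows D = {g_vec x C | x C. C \<in> snd ` set D \<and> x \<in> C}"

text \<open>rank G(D) = dimension of the row space (over the reals, equal to the rank over Q).\<close>
definition G_rank :: "('a::finite \<times> 'a set) list \<Rightarrow> nat" where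
  "G_rank D = dim (G_rows D)"

end

theory Submission
  imports Defs
begin

definition Lf :: "'a::finite \<Rightarrow> 'a set \<Rightarrow> real^('a \<times> 'a) \<Rightarrow> real" where
  "Lf x C u = (\<Sum>y\<in>C - {x}. (u $ (x, y) - u $ (y, x))
                     + (\<Sum>z\<in>C - {x, y}. u $ (x, z) - u $ (y, z)))"

definition sx :: "real^('a::finite \<times> 'a) \<Rightarrow> 'a \<Rightarrow> 'a set \<Rightarrow> real" where
  "sx u x C = (\<Sum>z\<in>C - {x}. u $ (x, z))"

lemma Lf_linear: "linear (Lf x C)"
  by (rule linearI) (simp_all add: Lf_def sum.distrib sum_distrib_left algebra_simps sum_subtractf)

lemma g_vec_prop: "(\<forall>a. g_vec x C $ (a,a) = 0) \<and> (\<forall>u. g_vec x C \<bullet> u = Lf x C u)"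
proof -
  let ?P = "\<lambda>g. (\<forall>a. g $ (a, a) = 0) \<and>
     (\<forall>u. g \<bullet> u = (\<Sum>y\<in>C - {x}. (u $ (x, y) - u $ (y, x))
                     + (\<Sum>z\<in>C - {x, y}. u $ (x, z) - u $ (y, z))))"
  define g where "g = (\<Sum>i\<in>Basis. Lf x C i *\<^sub>R i)"
  have gi: "g \<bullet> u = Lf x C u" for u
  proof -
    have "Lf x C u = (Lf x C u) \<bullet> 1" by simp
    also have "\<dots> = (\<Sum>i\<in>Basis. (u\<bullet>i) * (Lf x C i \<bullet> 1))"
      by (rule Linear_Algebra.linear_componentwise[OF Lf_linear])
    also have "\<dots> = g \<bullet> u" unfolding g_def inner_sum_left inner_scaleR_left
      by (simp add: mult.commute inner_commute)
    finally show ?thesis by simp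
  qed
  have "g $ (a,a) = 0" for a
  proof -
    have "g $ (a,a) = Lf x C (axis (a,a) 1)"
      using gi by (simp add: cart_eq_inner_axis)
    also have "\<dots> = 0" unfolding Lf_def
      by (intro sum.neutral ballI) (auto simp: axis_def split: if_splits intro!: sum.neutral)
    finally show ?thesis .
  qed
  with gi have Pg: "?P g" by (simp add: Lf_def)
  have "?P h \<Longrightarrow> h = g" for h
  proof -
    assume "?P h"
    then have "(h - g) \<bullet> w = 0" for w using Pg by (simp add: inner_diff_left)
    from this[of "h-g"] show "h = g" by simp
  qed
  with Pg have "?P (THE g. ?P g)" by (rule theI)
  then show ?thesis unfolding g_vec_def by (simp add: Lf_def)
qed

lemma Lf_sx: "x \<in> C \<Longrightarrow> Lf x C u = (\<Sum>y\<in>C-{x}. sx u x C - sx u y C)"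
  unfolding Lf_def
proof (rule sum.cong[OF refl])
  assume xC: "x \<in> C"
  fix y assume y: "y \<in> C - {x}"
  have e1: "C - {x} = insert y (C - {x,y})" and e2: "C - {y} = insert x (C - {x,y})"
    using y xC by auto
  have "sx u x C = u$(x,y) + (\<Sum>z\<in>C - {x,y}. u$(x,z))"
    unfolding sx_def e1 by (subst sum.insert) auto
  moreover have "sx u y C = u$(y,x) + (\<Sum>z\<in>C - {x,y}. u$(y,z))"
    unfolding sx_def e2 using y by (subst sum.insert) auto
  ultimately show "u $ (x, y) - u $ (y, x) + (\<Sum>z\<in>C - {x, y}. u $ (x, z) - u $ (y, z)) =
         sx u x C - sx u y C" by (simp add: sum_subtractf)
qed

lemma Lf_sx2: "x \<in> C \<Longrightarrow> Lf x C u = real (card C) * sx u x C - (\<Sum>y\<in>C. sx u y C)"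
proof -
  assume x: "x \<in> C"
  have "Lf x C u = (\<Sum>y\<in>C. sx u x C - sx u y C)"
    unfolding Lf_sx[OF x] using sum.remove[of C x "\<lambda>y. sx u x C - sx u y C"] x by simp
  then show ?thesis by (simp add: sum_subtractf)
qed

lemma sx_diff: "sx (u' - u) x C = sx u' x C - sx u x C"
  by (simp add: sx_def sum_subtractf)

lemma probs_iff:
  "(\<forall>x\<in>C. cdm_prob u x C = cdm_prob u' x C) \<longleftrightarrow> (\<forall>x\<in>C. g_vec x C \<bullet> (u' - u) = 0)"
proof (cases "C = {}")
  case True then show ?thesis by simp
next
  case False
  have gv: "g_vec x C \<bullet> w = Lf x C w" for x w using g_vec_prop by blast
  define Z where "Z v = (\<Sum>y\<in>C. exp (sx v y C))" for v
  have Zpos: "Z v > 0" for v unfolding Z_def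
    using False by (intro sum_pos) auto
  have cp: "cdm_prob v x C = exp (sx v x C) / Z v" for v x
    by (simp add: cdm_prob_def Z_def sx_def)
  show ?thesis
  proof
    assume H: "\<forall>x\<in>C. cdm_prob u x C = cdm_prob u' x C"
    have k: "sx u' x C - sx u x C = ln (Z u') - ln (Z u)" if "x \<in> C" for x
    proof -
      have "ln (cdm_prob u x C) = ln (cdm_prob u' x C)" using H that by simp
      then have "sx u x C - ln (Z u) = sx u' x C - ln (Z u')"
        unfolding cp using Zpos[of u] Zpos[of u'] by (simp add: ln_div)
      then show ?thesis by simp
    qed
    show "\<forall>x\<in>C. g_vec x C \<bullet> (u' - u) = 0"
    proof
      fix x assume x: "x \<in> C"
      show "g_vec x C \<bullet> (u' - u) = 0" unfolding gv Lf_sx[OF x] sx_diff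
        using k x by (intro sum.neutral) auto
    qed
  next
    assume H: "\<forall>x\<in>C. g_vec x C \<bullet> (u' - u) = 0"
    define k where "k = (\<Sum>y\<in>C. sx (u'-u) y C) / real (card C)"
    have cpos: "real (card C) > 0" using False by (simp add: card_gt_0_iff)
    have sk: "sx u' x C = sx u x C + k" if "x \<in> C" for x
    proof -
      have "real (card C) * sx (u'-u) x C - (\<Sum>y\<in>C. sx (u'-u) y C) = 0"
        using H that gv Lf_sx2[OF that] by metis
      then have "sx (u'-u) x C = k" unfolding k_def using cpos False
        by (simp add: eq_divide_eq mult.commute)
      then show ?thesis by (simp add: sx_diff)
    qed
    have Z': "Z u' = exp k * Z u" unfolding Z_def sum_distrib_left
      by (rule sum.cong) (auto simp: sk exp_add mult.commute)
    show "\<forall>x\<in>C. cdm_prob u x C = cdm_prob u' x C"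
      using sk by (auto simp: cp Z' exp_add)
  qed
qed

lemma ident_iff:
  "cdm_identifiable D \<longleftrightarrow>
   (\<forall>w. (\<forall>r\<in>G_rows D. r \<bullet> w = 0) \<longrightarrow> (\<exists>\<alpha>::real. \<forall>x z. x \<noteq> z \<longrightarrow> w $ (x, z) = \<alpha>))"
proof -
  have eq: "(\<forall>C\<in>snd ` set D. \<forall>x\<in>C. cdm_prob u x C = cdm_prob u' x C) \<longleftrightarrow>
        (\<forall>r\<in>G_rows D. r \<bullet> (u' - u) = 0)" for u u' :: "real^('a \<times> 'a)"
    using probs_iff[of _ u u'] unfolding G_rows_def by blast
  show ?thesis
  proof
    assume H: "cdm_identifiable D"
    show "\<forall>w. (\<forall>r\<in>G_rows D. r \<bullet> w = 0) \<longrightarrow> (\<exists>\<alpha>::real. \<forall>x z. x \<noteq> z \<longrightarrow> w $ (x, z) = \<alpha>)"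
    proof (intro allI impI)
      fix w :: "real^('a \<times> 'a)" assume "\<forall>r\<in>G_rows D. r \<bullet> w = 0"
      then have "\<forall>C\<in>snd ` set D. \<forall>x\<in>C. cdm_prob 0 x C = cdm_prob w x C"
        using eq[of 0 w] by simp
      then obtain \<alpha> where "\<forall>x z. x \<noteq> z \<longrightarrow> w $ (x, z) - (0::real^('a \<times> 'a)) $ (x, z) = \<alpha>"
        using H unfolding cdm_identifiable_def by blast
      then show "\<exists>\<alpha>::real. \<forall>x z. x \<noteq> z \<longrightarrow> w $ (x, z) = \<alpha>" by auto
    qed
  next
    assume H: "\<forall>w. (\<forall>r\<in>G_rows D. r \<bullet> w = 0) \<longrightarrow> (\<exists>\<alpha>::real. \<forall>x z. x \<noteq> z \<longrightarrow> w $ (x, z) = \<alpha>)"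
    show "cdm_identifiable D" unfolding cdm_identifiable_def
    proof (intro allI impI)
      fix u u' :: "real^('a \<times> 'a)"
      assume "\<forall>C\<in>snd ` set D. \<forall>x\<in>C. cdm_prob u x C = cdm_prob u' x C"
      then have "\<forall>r\<in>G_rows D. r \<bullet> (u' - u) = 0" using eq by blast
      then obtain \<alpha> where "\<forall>x z. x \<noteq> z \<longrightarrow> (u' - u) $ (x, z) = \<alpha>"
        using H by blast
      then show "\<exists>\<alpha>. \<forall>x z. x \<noteq> z \<longrightarrow> u' $ (x, z) - u $ (x, z) = \<alpha>" by auto
    qed
  qed
qed

lemma card_offdiag: "card {p::'a::finite \<times> 'a. fst p \<noteq> snd p} = CARD('a) * (CARD('a) - 1)"
proof -
  have "{p::'a \<times> 'a. fst p \<noteq> snd p} = UNIV - range (\<lambda>a. (a,a))" by auto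
  moreover have "card (range (\<lambda>a::'a. (a,a))) = CARD('a)"
    by (rule card_image) (auto simp: inj_on_def)
  ultimately have "card {p::'a \<times> 'a. fst p \<noteq> snd p} = CARD('a) * CARD('a) - CARD('a)"
    using card_cartesian_product[of "UNIV::'a set" "UNIV::'a set"]
    by (simp add: card_Diff_subset del: UNIV_Times_UNIV)
  then show ?thesis by (simp add: diff_mult_distrib2)
qed

lemma dimV: "dim {w::real^('a::finite \<times> 'a). \<forall>a. w $ (a,a) = 0} = CARD('a) * (CARD('a) - 1)"
proof -
  define d where "d = (\<lambda>p. axis p (1::real)) ` {p::'a \<times> 'a. fst p \<noteq> snd p}"
  have dB: "d \<subseteq> Basis" unfolding d_def Basis_vec_def by auto
  have "{w::real^('a \<times> 'a). \<forall>a. w $ (a,a) = 0} = {x. \<forall>i\<in>Basis. i \<notin> d \<longrightarrow> x \<bullet> i = 0}"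
  proof (intro set_eqI iffI; simp)
    fix x :: "real^('a \<times> 'a)"
    assume "\<forall>a. x $ (a, a) = 0"
    then show "\<forall>i\<in>Basis. i \<notin> d \<longrightarrow> x \<bullet> i = 0"
      unfolding d_def Basis_vec_def by (auto simp: inner_axis)
  next
    fix x :: "real^('a \<times> 'a)"
    assume H: "\<forall>i\<in>Basis. i \<notin> d \<longrightarrow> x \<bullet> i = 0"
    show "\<forall>a. x $ (a, a) = 0"
    proof
      fix a :: 'a
      have "axis (a,a) (1::real) \<in> Basis" by (auto simp: Basis_vec_def)
      moreover have "axis (a,a) (1::real) \<notin> d" unfolding d_def by (auto simp: axis_eq_axis)
      ultimately show "x $ (a,a) = 0" using H by (simp add: cart_eq_inner_axis)
    qed
  qed
  moreover have "card d = CARD('a) * (CARD('a) - 1)"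
    unfolding d_def card_offdiag[symmetric]
    by (rule card_image) (auto simp: inj_on_def axis_eq_axis)
  ultimately show ?thesis using dim_substandard[OF dB] by simp
qed

theorem theorem4:
  fixes D :: "('a::finite \<times> 'a set) list"
  assumes "\<forall>(x, C)\<in>set D. x \<in> C \<and> card C \<ge> 2"
  shows "cdm_identifiable D \<longleftrightarrow> G_rank D = CARD('a) * (CARD('a) - 1) - 1"
proof -
  define V where "V = {w::real^('a \<times> 'a). \<forall>a. w $ (a,a) = 0}"
  define one :: "real^('a \<times> 'a)" where "one = (\<chi> p. if fst p \<noteq> snd p then 1 else 0)"
  define W where "W = {w \<in> V. w \<bullet> one = 0}"
  have subV: "subspace V" unfolding V_def subspace_def by simp
  have subW: "subspace W" unfolding W_def V_def subspace_def
    by (simp add: inner_add_left)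
  have rowsW: "G_rows D \<subseteq> W"
  proof
    fix r assume "r \<in> G_rows D"
    then obtain x C where r: "r = g_vec x C" unfolding G_rows_def by blast
    have "Lf x C one = 0" unfolding Lf_def
    proof (intro sum.neutral ballI)
      fix y assume y: "y \<in> C - {x}"
      have "(\<Sum>z\<in>C - {x, y}. one $ (x, z) - one $ (y, z)) = 0"
        by (intro sum.neutral ballI) (auto simp: one_def)
      then show "one $ (x, y) - one $ (y, x) + (\<Sum>z\<in>C - {x, y}. one $ (x, z) - one $ (y, z)) = 0"
        using y by (auto simp: one_def)
    qed
    then have "r \<bullet> one = 0" unfolding r using g_vec_prop[of x C] by simp
    then show "r \<in> W" using g_vec_prop[of x C] unfolding W_def V_def r by simp
  qed
  have rk: "G_rank D = dim (G_rows D)" by (simp add: G_rank_def)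
  show ?thesis
  proof (cases "CARD('a) \<ge> 2")
    case False
    then have allEq: "\<forall>x y::'a. x = y"
      using card_le_Suc0_iff_eq[of "UNIV::'a set"] by simp
    then have "V = {0}" unfolding V_def
      by (auto simp: vec_eq_iff) (metis prod.collapse)
    then have "G_rows D \<subseteq> {0}" using rowsW unfolding W_def by auto
    then have "dim (G_rows D) = 0"
      using dim_subset[of "G_rows D" "{0::real^('a \<times> 'a)}"] by simp
    moreover have "cdm_identifiable D" unfolding cdm_identifiable_def using allEq by auto
    moreover have "CARD('a) * (CARD('a) - 1) - 1 = 0" using False by simp
    ultimately show ?thesis using rk by simp
  next
    case True
    obtain a b :: 'a where ab: "a \<noteq> b"
      using True card_le_Suc0_iff_eq[of "UNIV::'a set"] by auto
    have one0: "one \<noteq> 0" using ab unfolding one_def by (auto simp: vec_eq_iff)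
    then have oo: "one \<bullet> one \<noteq> 0" by simp
    have oneV: "one \<in> V" unfolding V_def one_def by simp
    have spW: "span W = W" using subW by simp
    have "one \<notin> span W" unfolding spW using oo unfolding W_def by auto
    then have dI: "dim (insert one W) = dim W + 1" by (simp add: dim_insert)
    have decomp: "v - ((v \<bullet> one) / (one \<bullet> one)) *\<^sub>R one \<in> W" if "v \<in> V" for v
      using that oneV oo unfolding W_def V_def by (simp add: inner_diff_left)
    have "span (insert one W) = V"
    proof
      show "span (insert one W) \<subseteq> V"
        using oneV subV by (intro span_minimal) (auto simp: W_def)
      show "V \<subseteq> span (insert one W)"
      proof
        fix v assume v: "v \<in> V"
        have "v = (v - ((v \<bullet> one) / (one \<bullet> one)) *\<^sub>R one) + ((v \<bullet> one) / (one \<bullet> one)) *\<^sub>R one"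
          by simp
        also have "\<dots> \<in> span (insert one W)"
          using decomp[OF v] by (intro span_add span_scale) (auto intro: span_base)
        finally show "v \<in> span (insert one W)" .
      qed
    qed
    then have "dim V = dim W + 1" using dI dim_span[of "insert one W"] by simp
    then have dW: "dim W = CARD('a) * (CARD('a) - 1) - 1" using dimV[where 'a='a] unfolding V_def by simp
    have "cdm_identifiable D \<longleftrightarrow> dim (G_rows D) = dim W"
    proof
      assume H: "cdm_identifiable D"
      show "dim (G_rows D) = dim W"
      proof (rule ccontr)
        assume ne: "dim (G_rows D) \<noteq> dim W"
        have pss: "span (G_rows D) \<subset> span W"
        proof
          show "span (G_rows D) \<subseteq> span W" using rowsW by (rule span_mono)
          show "span (G_rows D) \<noteq> span W" using ne by (metis dim_span)
        qed
        then obtain w where w: "w \<noteq> 0" "w \<in> span W"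
          "\<And>y. y \<in> span (G_rows D) \<Longrightarrow> orthogonal w y"
          using orthogonal_to_subspace_exists_gen[OF pss] by blast
        have wW: "w \<in> W" using w(2) spW by simp
        have "\<forall>r\<in>G_rows D. r \<bullet> w = 0"
          using w(3) by (auto simp: orthogonal_def inner_commute intro: span_base)
        then obtain \<alpha> where al: "\<forall>x z. x \<noteq> z \<longrightarrow> w $ (x, z) = \<alpha>"
          using H ident_iff by blast
        have wa: "w = \<alpha> *\<^sub>R one"
          using al wW unfolding W_def V_def one_def
          by (auto simp: vec_eq_iff)
        then have "\<alpha> * (one \<bullet> one) = 0" using wW unfolding W_def by simp
        then have "\<alpha> = 0" using oo by simp
        then show False using wa w(1) by simp
      qed
    next
      assume H: "dim (G_rows D) = dim W"
      have WS: "W \<subseteq> span (G_rows D)"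
        using dim_eq_span[of "G_rows D" W] rowsW H span_superset[of W] by auto
      show "cdm_identifiable D" unfolding ident_iff
      proof (intro allI impI)
        fix w :: "real^('a \<times> 'a)"
        assume ort: "\<forall>r\<in>G_rows D. r \<bullet> w = 0"
        define w' :: "real^('a \<times> 'a)" where "w' = (\<chi> p. if fst p \<noteq> snd p then w $ p else 0)"
        define c where "c = (w' \<bullet> one) / (one \<bullet> one)"
        define e where "e = w' - c *\<^sub>R one"
        have w'V: "w' \<in> V" unfolding V_def w'_def by simp
        have eW: "e \<in> W" unfolding e_def c_def by (rule decomp[OF w'V])
        have "orthogonal w e"
        proof (rule orthogonal_to_span)
          show "e \<in> span (G_rows D)" using WS eW by blast
          show "orthogonal w y" if "y \<in> G_rows D" for y
            using ort that unfolding orthogonal_def by (metis inner_commute)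
        qed
        then have "w \<bullet> e = 0" by (simp add: orthogonal_def)
        moreover have "w \<bullet> e = w' \<bullet> e"
          unfolding inner_vec_def
        proof (rule sum.cong[OF refl])
          fix p :: "'a \<times> 'a"
          have eV: "\<forall>a. e $ (a,a) = 0" using eW by (simp add: W_def V_def)
          obtain a b where p: "p = (a,b)" by (cases p)
          show "w $ p \<bullet> e $ p = w' $ p \<bullet> e $ p"
            using eV by (cases "a = b") (simp_all add: p w'_def)
        qed
        moreover have "w' \<bullet> e = e \<bullet> e"
        proof -
          have "w' = e + c *\<^sub>R one" unfolding e_def by simp
          then have "w' \<bullet> e = e \<bullet> e + c * (one \<bullet> e)" by (simp add: inner_add_left)
          also have "one \<bullet> e = 0" using eW unfolding W_def by (simp add: inner_commute)
          finally show ?thesis by simp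
        qed
        ultimately have "e = 0" by simp
        then have "w' = c *\<^sub>R one" unfolding e_def by simp
        then have wc: "w' $ (x,z) = (c *\<^sub>R one) $ (x,z)" for x z by simp
        have "\<forall>x z. x \<noteq> z \<longrightarrow> w $ (x, z) = c"
        proof (intro allI impI)
          fix x z :: 'a assume "x \<noteq> z"
          then show "w $ (x, z) = c" using wc[of x z] by (simp add: w'_def one_def)
        qed
        then show "\<exists>\<alpha>::real. \<forall>x z. x \<noteq> z \<longrightarrow> w $ (x, z) = \<alpha>" by blast
      qed
    qed
    then show ?thesis using rk dW by simp
  qed
qed

end
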